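(* For every DBI normal formula $\varphi$, the pointed action model $(\mathcal{U}_\varphi,0)$ (more precisely, its pointed frame $(\langle E^\varphi,Q^\varphi\rangle,0)$) is privatized with respect to $\varphi$.
   Context: Agents $\mathcal{A}=\{1,\dots,n\}$, $n>1$; language $\mathcal{L}$: $\varphi ::= p \mid \neg\varphi \mid (\varphi\wedge\varphi)\mid B_i\varphi$, $\top$ the usual tautology. An action model $\mathcal{U}=\langle E,Q,\mathsf{pre}\rangle$ has a nonempty set $E$ of events, relations $Q_i\subseteq E\times E$, $\mathsf{pre}:E\to\mathcal{L}$. Target agents: $\mathsf{ta}(p)=\varnothing$, $\mathsf{ta}(\neg\phi)=\mathsf{ta}(\phi)$, $\mathsf{ta}(\phi\wedge\psi)=\mathsf{ta}(\phi)\cup\mathsf{ta}(\psi)$, $\mathsf{ta}(B_i\phi)=\{i\}$. DBI formulas: $\varphi ::= B_i\xi \mid B_i(\xi\wedge\varphi)\mid(\varphi\wedge\varphi)\mid B_i\varphi$, $\xi$ purely propositional. DBI normal: $B_i\xi$ always; $B_i\varphi$, $B_i(\xi\wedge\varphi)$ iff $\varphi$ DBI normal and $i\notin\mathsf{ta}(\varphi)$; $\varphi\wedge\psi$ iff both DBI normal and $\mathsf{ta}(\varphi)\cap\mathsf{ta}(\psi)=\varnothing$. Action model $\mathcal{U}_\varphi=\langle E^\varphi,Q^\varphi,\mathsf{pre}^\varphi\rangle$ for DBI normal $\varphi$, recursively; always $E^\varphi=\{0,-1\}\sqcup D^\varphi$, $\varnothing\ne D^\varphi\subseteq\{1,2,\dots\}$,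 $\mathsf{pre}^\varphi(0)=\mathsf{pre}^\varphi(-1)=\top$; $\underline{Q}_j:=Q_j\cap((E\setminus\{0\})\times(E\setminus\{0\}))$. (1) $\varphi=B_i\xi$: $D=\{m\}$, $\mathsf{pre}(m)=\xi$, $Q_j=\{(0,-1),(m,-1),(-1,-1)\}$ ($j\ne i$), $Q_i=\{(0,m),(m,m),(-1,-1)\}$. (2) $\varphi=B_i\psi$: fresh $m\ge1$, $m\notin D^\psi$; $D^\varphi=D^\psi\sqcup\{m\}$; $\mathsf{pre}^\varphi$ extends $\mathsf{pre}^\psi$ with $\mathsf{pre}^\varphi(m)=\top$; $Q^\varphi_j=\underline{Q}^\psi_j\cup\{(0,-1)\}\cup\{(m,k)\mid(0,k)\in Q^\psi_j\}$ ($j\ne i$); $Q^\varphi_i=\underline{Q}^\psi_i\cup\{(0,m),(m,m)\}$. (3) $\varphi=B_i(\xi\wedge\psi)$: as (2) but $\mathsf{pre}^\varphi(m)=\xi$. (4) $\varphi=\psi\wedge\theta$: with $D^\psi\cap D^\theta=\varnothing$, $D^\varphi=D^\psi\sqcup D^\theta$, $\mathsf{pre}^\varphi=\mathsf{pre}^\psi\cup\mathsf{pre}^\theta$, $Q^\varphi_j=\underline{Q}^\psi_j\cup\underline{Q}^\theta_j\cup\{(0,k)\mid(0,k)\in Q^\psi_j\cup Q^\theta_j, k\in D^\psi\sqcup D^\theta\}\cup\{(0,-1)\mid\text{no such }k\text{ exists}\}$. Modal syntactic tree $\mathcal{T}_\varphi$ of a DBI formula (an out-tree with unlabeled root, other nodes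 labeled by agents/modalities): $\mathcal{T}_{B_i\xi}$ is a root with one child labeled $B_i$; $\mathcal{T}_{B_i\psi}=\mathcal{T}_{B_i(\xi\wedge\psi)}$ is obtained by labeling the root of $\mathcal{T}_\psi$ with $B_i$ and making it the only child of a new root; $\mathcal{T}_{\psi\wedge\theta}$ is the disjoint union of $\mathcal{T}_\psi$ and $\mathcal{T}_\theta$ with their roots identified. $RootP(\varphi)$ is the set of paths in $\mathcal{T}_\varphi$ starting at the root (of any length $l\ge0$); the agent sequence $\mathsf{agSeq}(\sigma)=(i_1,\dots,i_l)$ of such a path lists the agents labeling its non-root nodes in order (empty for the empty path). For a frame $\mathcal{F}=\langle W,R\rangle$, $w\in W$ and an agent sequence $(i_1,\dots,i_l)$, the cluster is $C^{i_1,\dots,i_l}_{\mathcal{F},w}=\{u\in W\mid \exists u_2,\dots,u_l\in W:\ wR_{i_1}u_2R_{i_2}\cdots u_lR_{i_l}u\}$, with $C^\varepsilon_{\mathcal{F},w}=\{w\}$. $\mathcal{A}^l_{\mathrm{nsr}}$ is the set of agent sequences of length $l$ with no two successive equal agents. $(\mathcal{F},w)$ is privatized w.r.t. $\varphi$ iff for every $\sigma\in RootP(\varphi)$: $C^{\mathsf{agSeq}(\sigma)}_{\mathcal{F},w}\neq\varnothing$ and for every $s\in\bigcup_{l\ge0}\mathcal{A}^l_{\mathrm{nsr}}\setminus\{\mathsf{agSeq}(\sigma)\}$, $C^{\mathsf{agSeq}(\sigma)}_{\mathcal{F},w}\cap C^{s}_{\mathcal{F},w}=\varnothing$. *)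

theory Defs
  imports Main
begin

datatype 'p fm = Prop 'p | Neg "'p fm" | Conj "'p fm" "'p fm" | Bel nat "'p fm"

text \<open>The usual tautology (its atom is irrelevant; we fix an arbitrary one).\<close>
definition fm_top :: "'p fm" where
  "fm_top = Neg (Conj (Prop undefined) (Neg (Prop undefined)))"

primrec agents_of :: "'p fm \<Rightarrow> nat set" where
  "agents_of (Prop p) = {}"
| "agents_of (Neg a) = agents_of a"
| "agents_of (Conj a b) = agents_of a \<union> agents_of b"
| "agents_of (Bel i a) = insert i (agents_of a)"

primrec propositional :: "'p fm \<Rightarrow> bool" where
  "propositional (Prop p) = True"
| "propositional (Neg a) = propositional a"
| "propositional (Conj a b) = (propositional a \<and> propositional b)"
| "propositional (Bel i a) = False"

primrec ta :: "'p fm \<Rightarrow> nat set" where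
  "ta (Prop p) = {}"
| "ta (Neg a) = ta a"
| "ta (Conj a b) = ta a \<union> ta b"
| "ta (Bel i a) = {i}"

inductive dbi_normal :: "'p fm \<Rightarrow> bool" where
  bel_prop: "propositional \<xi> \<Longrightarrow> dbi_normal (Bel i \<xi>)"
| bel: "dbi_normal \<phi> \<Longrightarrow> i \<notin> ta \<phi> \<Longrightarrow> dbi_normal (Bel i \<phi>)"
| bel_conj: "propositional \<xi> \<Longrightarrow> dbi_normal \<phi> \<Longrightarrow> i \<notin> ta \<phi>
      \<Longrightarrow> dbi_normal (Bel i (Conj \<xi> \<phi>))"
| conj: "dbi_normal \<phi> \<Longrightarrow> dbi_normal \<psi> \<Longrightarrow> ta \<phi> \<inter> ta \<psi> = {}
      \<Longrightarrow> dbi_normal (Conj \<phi> \<psi>)"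

text \<open>Events are integers; the event set is {0,-1} plus D with D a nonempty set
of positive integers. An action model is given by (D, Q, pre) with
E = {0,-1} \<union> D.  The relation below describes all admissible outcomes
of the recursive construction (for every choice of fresh events).\<close>

definition under :: "int set \<Rightarrow> (int \<times> int) set \<Rightarrow> (int \<times> int) set" where
  "under E R = R \<inter> ((E - {0}) \<times> (E - {0}))"

definition evs :: "int set \<Rightarrow> int set" where
  "evs D = {0, -1} \<union> D"

inductive U_model :: "'p fm \<Rightarrow> int set \<Rightarrow> (nat \<Rightarrow> (int \<times> int) set) \<Rightarrow> (int \<Rightarrow> 'p fm) \<Rightarrow> bool"
where
  base: "propositional \<xi> \<Longrightarrow> (m::int) \<ge> 1 \<Longrightarrow>
     U_model (Bel i \<xi>) {m}
       (\<lambda>j. if j = i then {(0,m),(m,m),(-1,-1)} else {(0,-1),(m,-1),(-1,-1)})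
       ((\<lambda>_. fm_top)(m := \<xi>))"
| bel: "U_model \<psi> D Q pre \<Longrightarrow> (m::int) \<ge> 1 \<Longrightarrow> m \<notin> D \<Longrightarrow>
     U_model (Bel i \<psi>) (insert m D)
       (\<lambda>j. if j = i then under (evs D) (Q j) \<union> {(0,m),(m,m)}
            else under (evs D) (Q j) \<union> {(0,-1)} \<union> {(m,k) | k. (0,k) \<in> Q j})
       (pre(m := fm_top))"
| bel_conj: "propositional \<xi> \<Longrightarrow> U_model \<psi> D Q pre \<Longrightarrow> (m::int) \<ge> 1 \<Longrightarrow> m \<notin> D \<Longrightarrow>
     U_model (Bel i (Conj \<xi> \<psi>)) (insert m D)
       (\<lambda>j. if j = i then under (evs D) (Q j) \<union> {(0,m),(m,m)}
            else under (evs D) (Q j) \<union> {(0,-1)} \<union> {(m,k) | k. (0,k) \<in> Q j})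
       (pre(m := \<xi>))"
| conj: "U_model \<psi> D1 Q1 pre1 \<Longrightarrow> U_model \<theta> D2 Q2 pre2 \<Longrightarrow> D1 \<inter> D2 = {} \<Longrightarrow>
     U_model (Conj \<psi> \<theta>) (D1 \<union> D2)
       (\<lambda>j. under (evs D1) (Q1 j) \<union> under (evs D2) (Q2 j)
            \<union> {(0,k) | k. (0,k) \<in> Q1 j \<union> Q2 j \<and> k \<in> D1 \<union> D2}
            \<union> {(0,-1) | _::unit. \<not> (\<exists>k. (0,k) \<in> Q1 j \<union> Q2 j \<and> k \<in> D1 \<union> D2)})
       (\<lambda>k. if k \<in> D1 then pre1 k else pre2 k)"

text \<open>Non-root nodes of the modal syntactic tree, labelled by agents; the
(unlabelled) root is represented by the list of its children.\<close>
datatype ltree = Node (label: nat) (children: "ltree list")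

text \<open>Modal syntactic tree (children of the root). On DBI formulas this agrees
with the paper's definition: propositional subformulas contribute nothing.\<close>
primrec mtree :: "'p fm \<Rightarrow> ltree list" where
  "mtree (Prop p) = []"
| "mtree (Neg a) = mtree a"
| "mtree (Conj a b) = mtree a @ mtree b"
| "mtree (Bel i a) = [Node i (mtree a)]"

text \<open>Paths starting at the root, given as the list of non-root nodes visited.\<close>
inductive rootpath :: "ltree list \<Rightarrow> ltree list \<Rightarrow> bool" where
  nil: "rootpath F []"
| cons: "t \<in> set F \<Longrightarrow> rootpath (children t) p \<Longrightarrow> rootpath F (t # p)"

definition RootP :: "'p fm \<Rightarrow> ltree list set" where
  "RootP \<phi> = {\<sigma>. rootpath (mtree \<phi>) \<sigma>}"

definition agSeq :: "ltree list \<Rightarrow> nat list" where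
  "agSeq \<sigma> = map label \<sigma>"

primrec reach :: "'w set \<Rightarrow> (nat \<Rightarrow> ('w \<times> 'w) set) \<Rightarrow> 'w \<Rightarrow> nat list \<Rightarrow> 'w \<Rightarrow> bool" where
  "reach W R w [] u = (u = w)"
| "reach W R w (i # s) u = (\<exists>v \<in> W. (w, v) \<in> R i \<and> reach W R v s u)"

definition cluster :: "'w set \<Rightarrow> (nat \<Rightarrow> ('w \<times> 'w) set) \<Rightarrow> 'w \<Rightarrow> nat list \<Rightarrow> 'w set" where
  "cluster W R w s = {u \<in> W. reach W R w s u}"

definition nsr :: "nat \<Rightarrow> nat list \<Rightarrow> bool" where
  "nsr n s \<longleftrightarrow> set s \<subseteq> {1..n} \<and> (\<forall>k. Suc k < length s \<longrightarrow> s ! k \<noteq> s ! Suc k)"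

definition privatized :: "nat \<Rightarrow> 'w set \<Rightarrow> (nat \<Rightarrow> ('w \<times> 'w) set) \<Rightarrow> 'w \<Rightarrow> 'p fm \<Rightarrow> bool" where
  "privatized n W R w \<phi> \<longleftrightarrow>
     (\<forall>\<sigma> \<in> RootP \<phi>. cluster W R w (agSeq \<sigma>) \<noteq> {} \<and>
        (\<forall>s. nsr n s \<and> s \<noteq> agSeq \<sigma> \<longrightarrow> cluster W R w (agSeq \<sigma>) \<inter> cluster W R w s = {}))"

end

theory Submission
  imports Defs
begin

fun nsrc :: "nat list \<Rightarrow> bool" where
  "nsrc (x#y#r) = (x \<noteq> y \<and> nsrc (y#r))"
| "nsrc _ = True"

lemma nsrc_tl: "nsrc (x#r) \<Longrightarrow> nsrc r"
  by (cases r) auto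

lemma nsr_nsrc_aux: "(\<forall>k. Suc k < length s \<longrightarrow> s!k \<noteq> s!Suc k) \<Longrightarrow> nsrc s"
proof (induction s rule: nsrc.induct)
  case (1 x y r)
  have "x \<noteq> y" using 1(2)[rule_format, of 0] by simp
  moreover have "nsrc (y#r)"
  proof (rule 1(1))
    show "\<forall>k. Suc k < length (y#r) \<longrightarrow> (y#r)!k \<noteq> (y#r)!Suc k"
    proof (intro allI impI)
      fix k assume "Suc k < length (y#r)"
      then have "Suc (Suc k) < length (x#y#r)" by simp
      then have "(x#y#r)!Suc k \<noteq> (x#y#r)!Suc (Suc k)" using 1(2) by blast
      then show "(y#r)!k \<noteq> (y#r)!Suc k" by simp
    qed
  qed
  ultimately show ?case by simp
qed auto

lemma nsr_nsrc: "nsr n s \<Longrightarrow> nsrc s"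
  unfolding nsr_def using nsr_nsrc_aux by blast

lemma reach_in: "w \<in> W \<Longrightarrow> reach W R w s u \<Longrightarrow> u \<in> W"
  by (induction s arbitrary: w) auto

lemma reach_sink: assumes "\<forall>j y. (x,y) \<in> R j \<longrightarrow> y = x" shows "reach W R x s u \<Longrightarrow> u = x"
  using assms by (induction s) auto

lemma reach_avoid: assumes "\<forall>j x. (x,z) \<notin> R j" shows "reach W R w (j#s) u \<Longrightarrow> u \<noteq> z"
  using assms by (induction s arbitrary: w j) auto

lemma reach_transfer:
  assumes A: "\<And>x j y. x \<in> S \<Longrightarrow> ((x,y) \<in> R' j \<and> y \<in> W') \<longleftrightarrow> ((x,y) \<in> R j \<and> y \<in> W)"
    and B: "\<And>x j y. x \<in> S \<Longrightarrow> (x,y) \<in> R j \<Longrightarrow> y \<in> W \<Longrightarrow> y \<in> S"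
  shows "x \<in> S \<Longrightarrow> reach W' R' x s u \<longleftrightarrow> reach W R x s u"
proof (induction s arbitrary: x)
  case Nil then show ?case by simp
next
  case (Cons j s)
  show ?case
  proof
    assume "reach W' R' x (j#s) u"
    then obtain v where v: "v \<in> W'" "(x,v) \<in> R' j" "reach W' R' v s u" by auto
    then have "(x,v) \<in> R j" "v \<in> W" using A[OF Cons(2)] by auto
    moreover then have "v \<in> S" using B Cons(2) by blast
    ultimately show "reach W R x (j#s) u" using Cons(1) v by auto
  next
    assume "reach W R x (j#s) u"
    then obtain v where v: "v \<in> W" "(x,v) \<in> R j" "reach W R v s u" by auto
    then have "(x,v) \<in> R' j" "v \<in> W'" using A[OF Cons(2)] by auto
    moreover have "v \<in> S" using B Cons(2) v by blast
    ultimately show "reach W' R' x (j#s) u" using Cons(1) v by auto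
  qed
qed

lemma rootpath_Cons: "rootpath F (t#p) \<longleftrightarrow> t \<in> set F \<and> rootpath (children t) p"
  by (auto elim: rootpath.cases intro: rootpath.intros)

lemma rootpath_single: "rootpath [Node i F] \<sigma> \<longleftrightarrow> \<sigma> = [] \<or> (\<exists>\<sigma>1. \<sigma> = Node i F # \<sigma>1 \<and> rootpath F \<sigma>1)"
  by (cases \<sigma>) (auto simp: rootpath_Cons intro: rootpath.intros)

lemma rootpath_append: "rootpath (F @ G) \<sigma> \<longleftrightarrow> rootpath F \<sigma> \<or> rootpath G \<sigma>"
  by (cases \<sigma>) (auto simp: rootpath_Cons intro: rootpath.intros)

lemma agSeq_simps[simp]: "agSeq [] = []" "agSeq (t#p) = label t # agSeq p"
  by (auto simp: agSeq_def)

definition Inv :: "nat set \<Rightarrow> ltree list \<Rightarrow> int set \<Rightarrow> (nat \<Rightarrow> (int \<times> int) set) \<Rightarrow> bool" where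
"Inv T F D Q \<longleftrightarrow>
 label ` set F = T \<and>
 (\<forall>x\<in>D. x \<ge> 1) \<and>
 (\<forall>j. Q j \<subseteq> evs D \<times> evs D) \<and>
 (\<forall>j x. (x,0) \<notin> Q j) \<and>
 (\<forall>j y. (-1,y) \<in> Q j \<longleftrightarrow> y = -1) \<and>
 (\<forall>j\<in>T. (\<exists>k\<in>D. (0,k)\<in>Q j) \<and> (\<forall>k. (0,k)\<in>Q j \<longrightarrow> k\<in>D)) \<and>
 (\<forall>j k. j \<notin> T \<longrightarrow> (0,k)\<in>Q j \<longrightarrow> k = -1) \<and>
 (\<forall>\<sigma>. rootpath F \<sigma> \<longrightarrow> nsrc (agSeq \<sigma>)) \<and>
 (\<forall>\<sigma>. rootpath F \<sigma> \<longrightarrow> (\<exists>u. reach (evs D) Q 0 (agSeq \<sigma>) u)) \<and>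
 (\<forall>\<sigma> u. rootpath F \<sigma> \<longrightarrow> reach (evs D) Q 0 (agSeq \<sigma>) u \<longrightarrow> u \<noteq> -1) \<and>
 (\<forall>s t u. nsrc s \<longrightarrow> nsrc t \<longrightarrow> reach (evs D) Q 0 s u \<longrightarrow> reach (evs D) Q 0 t u \<longrightarrow> u \<noteq> -1 \<longrightarrow> s = t)"

lemma InvD:
  assumes "Inv T F D Q"
  shows "label ` set F = T" "\<And>x. x\<in>D \<Longrightarrow> x \<ge> 1" "\<And>j x y. (x,y) \<in> Q j \<Longrightarrow> x \<in> evs D \<and> y \<in> evs D"
    "\<And>j x. (x,0) \<notin> Q j" "\<And>j y. (-1,y) \<in> Q j \<longleftrightarrow> y = -1"
    "\<And>j. j\<in>T \<Longrightarrow> \<exists>k\<in>D. (0,k)\<in>Q j" "\<And>j k. j\<in>T \<Longrightarrow> (0,k)\<in>Q j \<Longrightarrow> k\<in>D"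
    "\<And>j k. j \<notin> T \<Longrightarrow> (0,k)\<in>Q j \<Longrightarrow> k = -1"
    "\<And>\<sigma>. rootpath F \<sigma> \<Longrightarrow> nsrc (agSeq \<sigma>)"
    "\<And>\<sigma>. rootpath F \<sigma> \<Longrightarrow> \<exists>u. reach (evs D) Q 0 (agSeq \<sigma>) u"
    "\<And>\<sigma> u. rootpath F \<sigma> \<Longrightarrow> reach (evs D) Q 0 (agSeq \<sigma>) u \<Longrightarrow> u \<noteq> -1"
    "\<And>s t u. nsrc s \<Longrightarrow> nsrc t \<Longrightarrow> reach (evs D) Q 0 s u \<Longrightarrow> reach (evs D) Q 0 t u \<Longrightarrow> u \<noteq> -1 \<Longrightarrow> s = t"
  using assms unfolding Inv_def by blast+

definition belQ :: "nat \<Rightarrow> int set \<Rightarrow> (nat \<Rightarrow> (int \<times> int) set) \<Rightarrow> int \<Rightarrow> nat \<Rightarrow> (int \<times> int) set" where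
 "belQ i D Q m = (\<lambda>j. if j = i then under (evs D) (Q j) \<union> {(0,m),(m,m)}
            else under (evs D) (Q j) \<union> {(0,-1)} \<union> {(m,k) | k. (0,k) \<in> Q j})"

lemma bel_step:
  assumes inv: "Inv T F D Q" and iT: "i \<notin> T" and m1: "m \<ge> 1" and mD: "m \<notin> D"
  shows "Inv {i} [Node i F] (insert m D) (belQ i D Q m)"
proof -
  let ?W = "evs D" let ?W' = "evs (insert m D)" let ?Q = "belQ i D Q m"
  note I = InvD[OF inv]
  have memQ: "\<And>x y j. (x,y) \<in> ?Q j \<longleftrightarrow> (x \<in> evs D - {0} \<and> y \<in> evs D - {0} \<and> (x,y)\<in>Q j)
     \<or> (j = i \<and> x = 0 \<and> y = m) \<or> (j = i \<and> x = m \<and> y = m) \<or> (j \<noteq> i \<and> x = 0 \<and> y = -1)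
     \<or> (j \<noteq> i \<and> x = m \<and> (0,y) \<in> Q j)"
    by (auto simp: belQ_def under_def)
  have mW: "m \<notin> evs D" using m1 mD by (auto simp: evs_def)
  have J1: "\<forall>x\<in>insert m D. x \<ge> 1" using I(2) m1 by auto
  have J2: "\<forall>j. ?Q j \<subseteq> ?W' \<times> ?W'"
  proof (intro allI subsetI)
    fix j p assume "p \<in> ?Q j"
    then obtain x y where p: "p = (x,y)" "(x,y) \<in> ?Q j" by (cases p) auto
    then show "p \<in> ?W' \<times> ?W'" unfolding memQ using I(3)[where x=0 and y=y and j=j] by (auto simp: evs_def)
  qed
  have J3: "\<forall>j x. (x,0) \<notin> ?Q j" unfolding memQ using I(4) m1 by auto
  have J4: "\<forall>j y. (-1,y) \<in> ?Q j \<longleftrightarrow> y = -1" unfolding memQ using I(5) m1 by (auto simp: evs_def)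
  have q0i: "\<And>k. (0,k) \<in> ?Q i \<longleftrightarrow> k = m" unfolding memQ using m1 by auto
  have q0j: "\<And>j k. j \<noteq> i \<Longrightarrow> (0,k) \<in> ?Q j \<longleftrightarrow> k = -1" unfolding memQ using m1 by auto
  have J5: "\<forall>j\<in>{i}. (\<exists>k\<in>insert m D. (0,k)\<in>?Q j) \<and> (\<forall>k. (0,k)\<in>?Q j \<longrightarrow> k\<in>insert m D)"
    using q0i by auto
  have J6: "\<forall>j k. j \<notin> {i} \<longrightarrow> (0,k)\<in>?Q j \<longrightarrow> k = -1" using q0j by auto
  have tr: "\<And>x s u. x \<in> evs D - {0} \<Longrightarrow> reach ?W' ?Q x s u \<longleftrightarrow> reach ?W Q x s u"
  proof -
    fix x s u assume x: "x \<in> evs D - {0}"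
    show "reach ?W' ?Q x s u \<longleftrightarrow> reach ?W Q x s u"
    proof (rule reach_transfer[where S="evs D - {0}", OF _ _ x])
      fix x j y assume x: "x \<in> evs D - {0}"
      have "x \<noteq> m" using x mW by auto
      then show "((x,y) \<in> ?Q j \<and> y \<in> ?W') \<longleftrightarrow> ((x,y) \<in> Q j \<and> y \<in> ?W)"
        unfolding memQ using x I(3)[where x=x and y=y and j=j] I(4) by (auto simp: evs_def)
    next
      fix x j y assume "(x,y) \<in> Q j" "y \<in> ?W" then show "y \<in> evs D - {0}" using I(4) by auto
    qed
  qed
  have dm: "\<And>j a u. j \<noteq> i \<Longrightarrow> reach ?W' ?Q m (j#a) u \<longleftrightarrow> reach ?W Q 0 (j#a) u"
  proof -
    fix j a u assume j: "j \<noteq> i"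
    have e: "\<And>v. (m,v) \<in> ?Q j \<longleftrightarrow> (0,v) \<in> Q j" unfolding memQ using j mW m1 by auto
    have "reach ?W' ?Q m (j#a) u \<longleftrightarrow> (\<exists>v\<in>?W'. (m,v) \<in> ?Q j \<and> reach ?W' ?Q v a u)" by simp
    also have "\<dots> \<longleftrightarrow> (\<exists>v\<in>?W. (0,v) \<in> Q j \<and> reach ?W Q v a u)"
    proof
      assume "\<exists>v\<in>?W'. (m,v) \<in> ?Q j \<and> reach ?W' ?Q v a u"
      then obtain v where v: "(0,v) \<in> Q j" "reach ?W' ?Q v a u" using e by blast
      have vW: "v \<in> evs D - {0}" using I(3)[OF v(1)] I(4) v(1) by auto
      then show "\<exists>v\<in>?W. (0,v) \<in> Q j \<and> reach ?W Q v a u" using v tr by blast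
    next
      assume "\<exists>v\<in>?W. (0,v) \<in> Q j \<and> reach ?W Q v a u"
      then obtain v where v: "(0,v) \<in> Q j" "reach ?W Q v a u" by blast
      have vW: "v \<in> evs D - {0}" using I(3)[OF v(1)] I(4) v(1) by auto
      then have "v \<in> ?W'" by (auto simp: evs_def)
      then show "\<exists>v\<in>?W'. (m,v) \<in> ?Q j \<and> reach ?W' ?Q v a u" using v tr vW e by blast
    qed
    also have "\<dots> \<longleftrightarrow> reach ?W Q 0 (j#a) u" by simp
    finally show "reach ?W' ?Q m (j#a) u \<longleftrightarrow> reach ?W Q 0 (j#a) u" .
  qed
  have mW': "m \<in> ?W'" by (auto simp: evs_def)
  have e0: "\<And>a u. reach ?W' ?Q 0 (i#a) u \<longleftrightarrow> reach ?W' ?Q m a u"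
    using q0i mW' by auto
  have f0: "\<And>j a u. j \<noteq> i \<Longrightarrow> reach ?W' ?Q 0 (j#a) u \<Longrightarrow> u = -1"
  proof -
    fix j a u assume j: "j \<noteq> i" and r: "reach ?W' ?Q 0 (j#a) u"
    then obtain v where "(0,v) \<in> ?Q j" "reach ?W' ?Q v a u" by auto
    then have "v = -1" "reach ?W' ?Q (-1) a u" using q0j[OF j] by auto
    then show "u = -1" using reach_sink[of "-1" ?Q] J4 by blast
  qed
  have K7: "\<forall>\<sigma>. rootpath [Node i F] \<sigma> \<longrightarrow> nsrc (agSeq \<sigma>)"
  proof (intro allI impI)
    fix \<sigma> assume "rootpath [Node i F] \<sigma>"
    then consider "\<sigma> = []" | \<sigma>1 where "\<sigma> = Node i F # \<sigma>1" "rootpath F \<sigma>1"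
      unfolding rootpath_single by blast
    then show "nsrc (agSeq \<sigma>)"
    proof cases
      case 1 then show ?thesis by simp
    next
      case 2
      show ?thesis
      proof (cases \<sigma>1)
        case Nil then show ?thesis using 2 by simp
      next
        case (Cons t \<sigma>2)
        then have "t \<in> set F" using 2 by (simp add: rootpath_Cons)
        then have "label t \<noteq> i" using I(1) iT by auto
        then show ?thesis using 2 Cons I(9)[OF 2(2)] by simp
      qed
    qed
  qed
  have K8: "\<forall>\<sigma>. rootpath [Node i F] \<sigma> \<longrightarrow> (\<exists>u. reach ?W' ?Q 0 (agSeq \<sigma>) u) \<and> (\<forall>u. reach ?W' ?Q 0 (agSeq \<sigma>) u \<longrightarrow> u \<noteq> -1)"
  proof (intro allI impI)
    fix \<sigma> assume "rootpath [Node i F] \<sigma>"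
    then consider "\<sigma> = []" | \<sigma>1 where "\<sigma> = Node i F # \<sigma>1" "rootpath F \<sigma>1"
      unfolding rootpath_single by blast
    then show "(\<exists>u. reach ?W' ?Q 0 (agSeq \<sigma>) u) \<and> (\<forall>u. reach ?W' ?Q 0 (agSeq \<sigma>) u \<longrightarrow> u \<noteq> -1)"
    proof cases
      case 1 then show ?thesis by simp
    next
      case 2
      show ?thesis
      proof (cases \<sigma>1)
        case Nil then show ?thesis using 2 q0i mW' m1 by auto
      next
        case (Cons t \<sigma>2)
        then have "t \<in> set F" using 2 by (simp add: rootpath_Cons)
        then have ti: "label t \<noteq> i" using I(1) iT by auto
        have eq: "\<And>u. reach ?W' ?Q 0 (agSeq \<sigma>) u \<longleftrightarrow> reach ?W Q 0 (agSeq \<sigma>1) u"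
        proof -
          fix u
          have "reach ?W' ?Q 0 (agSeq \<sigma>) u \<longleftrightarrow> reach ?W' ?Q m (agSeq \<sigma>1) u"
            by (simp only: 2(1) agSeq_simps ltree.sel e0)
          also have "\<dots> \<longleftrightarrow> reach ?W Q 0 (agSeq \<sigma>1) u"
            by (simp only: Cons agSeq_simps dm[OF ti])
          finally show "reach ?W' ?Q 0 (agSeq \<sigma>) u \<longleftrightarrow> reach ?W Q 0 (agSeq \<sigma>1) u" .
        qed
        show ?thesis unfolding eq using I(10,11)[OF 2(2)] by blast
      qed
    qed
  qed
  have K9: "\<forall>s t u. nsrc s \<longrightarrow> nsrc t \<longrightarrow> reach ?W' ?Q 0 s u \<longrightarrow> reach ?W' ?Q 0 t u \<longrightarrow> u \<noteq> -1 \<longrightarrow> s = t"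
  proof (intro allI impI)
    fix s t u assume ns: "nsrc s" and nt: "nsrc t" and rs: "reach ?W' ?Q 0 s u" and rt: "reach ?W' ?Q 0 t u" and u: "u \<noteq> -1"
    have main: "\<And>s. nsrc s \<Longrightarrow> reach ?W' ?Q 0 s u \<Longrightarrow> (s = [] \<and> u = 0) \<or> (s = [i] \<and> u = m)
       \<or> (\<exists>s1. s = i # s1 \<and> s1 \<noteq> [] \<and> hd s1 \<noteq> i \<and> nsrc s1 \<and> reach ?W Q 0 s1 u)"
    proof -
      fix s assume ns: "nsrc s" and rs: "reach ?W' ?Q 0 s u"
      show "(s = [] \<and> u = 0) \<or> (s = [i] \<and> u = m)
       \<or> (\<exists>s1. s = i # s1 \<and> s1 \<noteq> [] \<and> hd s1 \<noteq> i \<and> nsrc s1 \<and> reach ?W Q 0 s1 u)"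
      proof (cases s)
        case Nil then show ?thesis using rs by simp
      next
        case (Cons j s1)
        have ji: "j = i" using f0 rs u Cons by blast
        then have rm: "reach ?W' ?Q m s1 u" using rs Cons e0 by simp
        show ?thesis
        proof (cases s1)
          case Nil then show ?thesis using rm Cons ji by simp
        next
          case (Cons j1 s2)
          have "j1 \<noteq> i" using ns \<open>s = j # s1\<close> Cons ji by simp
          then have "reach ?W Q 0 s1 u" using rm Cons dm by simp
          moreover have "nsrc s1" using ns \<open>s = j # s1\<close> nsrc_tl by blast
          ultimately show ?thesis using \<open>s = j # s1\<close> ji Cons \<open>j1 \<noteq> i\<close> by simp
        qed
      qed
    qed
    have mnW: "\<And>s1. reach ?W Q 0 s1 u \<Longrightarrow> u \<noteq> m" using reach_in[of 0 ?W] mW by (auto simp: evs_def)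
    have z: "\<And>s1. reach ?W Q 0 s1 u \<Longrightarrow> u \<noteq> 0 \<or> s1 = []"
      by (metis I(4) list.exhaust reach_avoid)
    show "s = t"
    proof -
      have m0: "m \<noteq> 0" using m1 by simp
      have zz: "\<And>s1. s1 \<noteq> [] \<Longrightarrow> reach ?W Q 0 s1 u \<Longrightarrow> u \<noteq> 0" using z by blast
      from main[OF ns rs] main[OF nt rt] show ?thesis
      proof (elim disjE exE conjE)
        fix s1 t1 assume "s = i # s1" "t = i # t1" "nsrc s1" "nsrc t1" "reach ?W Q 0 s1 u" "reach ?W Q 0 t1 u"
        then show "s = t" using I(12) u by blast
      qed (use m0 zz mnW in blast)+
    qed
  qed
  show ?thesis unfolding Inv_def
    using J1 J2 J3 J4 J5 J6 K7 K8 K9 by simp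
qed

lemma base_inv:
  assumes m1: "m \<ge> 1"
  shows "Inv {i} [Node i []] {m} (\<lambda>j. if j = i then {(0,m),(m,m),(-1,-1)} else {(0,-1),(m,-1),(-1,-1)})"
    (is "Inv _ _ _ ?Q")
proof -
  let ?W = "evs {m}"
  have mW: "m \<in> ?W" "0 \<in> ?W" "-1 \<in> ?W" by (auto simp: evs_def)
  have sink: "\<forall>j y. (-1,y) \<in> ?Q j \<longrightarrow> y = -1" using m1 by auto
  have main: "\<And>s u. nsrc s \<Longrightarrow> reach ?W ?Q 0 s u \<Longrightarrow> u \<noteq> -1 \<Longrightarrow> (s = [] \<and> u = 0) \<or> (s = [i] \<and> u = m)"
  proof -
    fix s u assume ns: "nsrc s" and r: "reach ?W ?Q 0 s u" and u: "u \<noteq> -1"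
    show "(s = [] \<and> u = 0) \<or> (s = [i] \<and> u = m)"
    proof (cases s)
      case Nil then show ?thesis using r by simp
    next
      case (Cons j s1)
      then obtain v where v: "(0,v) \<in> ?Q j" "reach ?W ?Q v s1 u" using r by auto
      show ?thesis
      proof (cases "j = i")
        case False
        then have "v = -1" using v m1 by auto
        then show ?thesis using reach_sink[OF sink] v u by blast
      next
        case True
        then have vm: "v = m" using v m1 by auto
        show ?thesis
        proof (cases s1)
          case Nil then show ?thesis using v vm Cons True by simp
        next
          case (Cons j1 s2)
          then have "j1 \<noteq> i" using ns \<open>s = j # s1\<close> True by simp
          then obtain w where "w = -1" "reach ?W ?Q w s2 u" using v vm Cons m1 by auto
          then show ?thesis using reach_sink[OF sink] u by blast
        qed
      qed
    qed
  qed
  show ?thesis unfolding Inv_def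
  proof (intro conjI allI impI ballI)
    fix \<sigma> assume "rootpath [Node i []] \<sigma>"
    then have "\<sigma> = [] \<or> \<sigma> = [Node i []]" unfolding rootpath_single by (auto elim: rootpath.cases)
    then show "nsrc (agSeq \<sigma>)" "\<exists>u. reach ?W ?Q 0 (agSeq \<sigma>) u" using mW by auto
  next
    fix \<sigma> u assume "rootpath [Node i []] \<sigma>" "reach ?W ?Q 0 (agSeq \<sigma>) u"
    moreover have "\<sigma> = [] \<or> \<sigma> = [Node i []]" using calculation(1) unfolding rootpath_single by (auto elim: rootpath.cases)
    ultimately show "u \<noteq> -1" using m1 by auto
  next
    fix s t u assume "nsrc s" "nsrc t" "reach ?W ?Q 0 s u" "reach ?W ?Q 0 t u" "u \<noteq> -1"
    then show "s = t" using main m1 by (metis not_one_le_zero)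
  qed (use m1 in \<open>auto simp: evs_def\<close>)
qed

definition conjQ :: "int set \<Rightarrow> (nat \<Rightarrow> (int \<times> int) set) \<Rightarrow> int set \<Rightarrow> (nat \<Rightarrow> (int \<times> int) set) \<Rightarrow> nat \<Rightarrow> (int \<times> int) set" where
 "conjQ D1 Q1 D2 Q2 = (\<lambda>j. under (evs D1) (Q1 j) \<union> under (evs D2) (Q2 j)
            \<union> {(0,k) | k. (0,k) \<in> Q1 j \<union> Q2 j \<and> k \<in> D1 \<union> D2}
            \<union> {(0,-1) | _::unit. \<not> (\<exists>k. (0,k) \<in> Q1 j \<union> Q2 j \<and> k \<in> D1 \<union> D2)})"

lemma conjQ_sym: "conjQ D1 Q1 D2 Q2 = conjQ D2 Q2 D1 Q1"
  unfolding conjQ_def by (auto simp: fun_eq_iff)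

lemma memconjQ: "(x,y) \<in> conjQ D1 Q1 D2 Q2 j \<longleftrightarrow>
   (x \<in> evs D1 - {0} \<and> y \<in> evs D1 - {0} \<and> (x,y) \<in> Q1 j) \<or>
   (x \<in> evs D2 - {0} \<and> y \<in> evs D2 - {0} \<and> (x,y) \<in> Q2 j) \<or>
   (x = 0 \<and> y \<in> D1 \<union> D2 \<and> (0,y) \<in> Q1 j \<union> Q2 j) \<or>
   (x = 0 \<and> y = -1 \<and> \<not> (\<exists>k. (0,k) \<in> Q1 j \<union> Q2 j \<and> k \<in> D1 \<union> D2))"
  unfolding conjQ_def under_def by auto

lemma conj_half:
  assumes inv1: "Inv T1 F1 D1 Q1" and inv2: "Inv T2 F2 D2 Q2" and dis: "D1 \<inter> D2 = {}"
    and tdis: "T1 \<inter> T2 = {}"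
  shows "\<And>x s u. x \<in> evs D1 - {0} \<Longrightarrow> reach (evs (D1 \<union> D2)) (conjQ D1 Q1 D2 Q2) x s u \<longleftrightarrow> reach (evs D1) Q1 x s u"
    and "\<And>s u. reach (evs (D1 \<union> D2)) (conjQ D1 Q1 D2 Q2) 0 s u \<Longrightarrow> u \<in> D1 \<Longrightarrow> reach (evs D1) Q1 0 s u"
    and "\<And>\<sigma>. rootpath F1 \<sigma> \<Longrightarrow> \<exists>u. reach (evs (D1 \<union> D2)) (conjQ D1 Q1 D2 Q2) 0 (agSeq \<sigma>) u"
    and "\<And>\<sigma> u. rootpath F1 \<sigma> \<Longrightarrow> reach (evs (D1 \<union> D2)) (conjQ D1 Q1 D2 Q2) 0 (agSeq \<sigma>) u \<Longrightarrow> u \<noteq> -1"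
proof -
  let ?W = "evs (D1 \<union> D2)" let ?Q = "conjQ D1 Q1 D2 Q2"
  note I = InvD[OF inv1] and J = InvD[OF inv2]
  have sink: "\<forall>j y. (-1,y) \<in> ?Q j \<longrightarrow> y = -1" unfolding memconjQ using I(5) J(5) by auto
  have tr1: "\<And>x s u. x \<in> evs D1 - {0} \<Longrightarrow> reach ?W ?Q x s u \<longleftrightarrow> reach (evs D1) Q1 x s u"
  proof -
    fix x s u assume x: "x \<in> evs D1 - {0}"
    show "reach ?W ?Q x s u \<longleftrightarrow> reach (evs D1) Q1 x s u"
    proof (rule reach_transfer[where S="evs D1 - {0}", OF _ _ x])
      fix x j y assume x: "x \<in> evs D1 - {0}"
      have xx: "x \<in> evs D2 \<Longrightarrow> x = -1" using x dis I(2) by (auto simp: evs_def)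
      show "((x,y) \<in> ?Q j \<and> y \<in> ?W) \<longleftrightarrow> ((x,y) \<in> Q1 j \<and> y \<in> evs D1)"
        unfolding memconjQ using x xx I(3)[where x=x and y=y and j=j] I(4) I(5) J(5)
        by (auto simp: evs_def)
    next
      fix x j y assume "(x,y) \<in> Q1 j" "y \<in> evs D1" then show "y \<in> evs D1 - {0}" using I(4) by auto
    qed
  qed
  have tr2: "\<And>x s u. x \<in> evs D2 - {0} \<Longrightarrow> reach ?W ?Q x s u \<longleftrightarrow> reach (evs D2) Q2 x s u"
  proof -
    fix x s u assume x: "x \<in> evs D2 - {0}"
    show "reach ?W ?Q x s u \<longleftrightarrow> reach (evs D2) Q2 x s u"
    proof (rule reach_transfer[where S="evs D2 - {0}", OF _ _ x])
      fix x j y assume x: "x \<in> evs D2 - {0}"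
      have xx: "x \<in> evs D1 \<Longrightarrow> x = -1" using x dis J(2) by (auto simp: evs_def)
      show "((x,y) \<in> ?Q j \<and> y \<in> ?W) \<longleftrightarrow> ((x,y) \<in> Q2 j \<and> y \<in> evs D2)"
        unfolding memconjQ using x xx J(3)[where x=x and y=y and j=j] J(4) I(5) J(5)
        by (auto simp: evs_def)
    next
      fix x j y assume "(x,y) \<in> Q2 j" "y \<in> evs D2" then show "y \<in> evs D2 - {0}" using J(4) by auto
    qed
  qed
  show "\<And>x s u. x \<in> evs D1 - {0} \<Longrightarrow> reach ?W ?Q x s u \<longleftrightarrow> reach (evs D1) Q1 x s u" by (rule tr1)
  show "reach (evs D1) Q1 0 s u" if r: "reach ?W ?Q 0 s u" and u: "u \<in> D1" for s u
  proof (cases s)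
    case Nil then show ?thesis using r u I(2) by fastforce
  next
    case (Cons j a)
    then obtain v where v: "v \<in> ?W" "(0,v) \<in> ?Q j" "reach ?W ?Q v a u" using r by auto
    have u1: "u \<ge> 1" using u I(2) by auto
    have "v \<noteq> -1" using reach_sink[OF sink] v u1 by force
    then have vv: "v \<in> D1 \<union> D2" "(0,v) \<in> Q1 j \<union> Q2 j" using v(2) unfolding memconjQ by auto
    show ?thesis
    proof (cases "v \<in> D1")
      case True
      then have "v \<notin> evs D2" using dis I(2)[of v] by (auto simp: evs_def)
      then have "(0,v) \<in> Q1 j" using vv J(3) by blast
      moreover have "reach (evs D1) Q1 v a u" using tr1[of v] v(3) True I(2) by (force simp: evs_def)
      moreover have "v \<in> evs D1" using True by (simp add: evs_def)
      ultimately show ?thesis using Cons by auto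
    next
      case False
      then have v2: "v \<in> D2" using vv by auto
      then have "reach (evs D2) Q2 v a u" using tr2[of v] v(3) J(2) by (force simp: evs_def)
      then have "u \<in> evs D2" using reach_in[of v "evs D2"] v2 by (auto simp: evs_def)
      then show ?thesis using u u1 dis by (auto simp: evs_def)
    qed
  qed
  show "\<exists>u. reach ?W ?Q 0 (agSeq \<sigma>) u" if rp: "rootpath F1 \<sigma>" for \<sigma>
  proof (cases \<sigma>)
    case Nil then show ?thesis by simp
  next
    case (Cons t \<sigma>1)
    have j1: "label t \<in> T1" using rp Cons I(1) by (auto simp: rootpath_Cons)
    obtain u where "reach (evs D1) Q1 0 (agSeq \<sigma>) u" using I(10)[OF rp] by blast
    then obtain v where v: "(0,v) \<in> Q1 (label t)" "reach (evs D1) Q1 v (agSeq \<sigma>1) u" using Cons by auto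
    have vD: "v \<in> D1" using I(7)[OF j1 v(1)] .
    then have "(0,v) \<in> ?Q (label t)" "v \<in> ?W" unfolding memconjQ using v by (auto simp: evs_def)
    moreover have "reach ?W ?Q v (agSeq \<sigma>1) u" using tr1[of v] v(2) vD I(2) by (force simp: evs_def)
    ultimately show ?thesis using Cons by auto
  qed
  show "u \<noteq> -1" if rp: "rootpath F1 \<sigma>" and r: "reach ?W ?Q 0 (agSeq \<sigma>) u" for \<sigma> u
  proof (cases \<sigma>)
    case Nil then show ?thesis using r by simp
  next
    case (Cons t \<sigma>1)
    have j1: "label t \<in> T1" using rp Cons I(1) by (auto simp: rootpath_Cons)
    have j2: "label t \<notin> T2" using j1 tdis by auto
    obtain v where v: "(0,v) \<in> ?Q (label t)" "reach ?W ?Q v (agSeq \<sigma>1) u" using r Cons by auto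
    obtain k where k: "k \<in> D1" "(0,k) \<in> Q1 (label t)" using I(6)[OF j1] by blast
    have "v \<in> D1 \<union> D2" "(0,v) \<in> Q1 (label t) \<union> Q2 (label t)" using v(1) k unfolding memconjQ by auto
    moreover have "(0,v) \<notin> Q2 (label t)" using J(8)[OF j2] calculation(1) I(2) J(2) by force
    ultimately have v1: "(0,v) \<in> Q1 (label t)" by blast
    then have vD: "v \<in> D1" using I(7)[OF j1] by blast
    then have "reach (evs D1) Q1 v (agSeq \<sigma>1) u" using tr1[of v] v(2) I(2) by (force simp: evs_def)
    then have "reach (evs D1) Q1 0 (agSeq \<sigma>) u" using Cons v1 vD by (auto simp: evs_def)
    then show ?thesis using I(11)[OF rp] by blast
  qed
qed

lemma conj_step:
  assumes inv1: "Inv T1 F1 D1 Q1" and inv2: "Inv T2 F2 D2 Q2" and dis: "D1 \<inter> D2 = {}"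
    and tdis: "T1 \<inter> T2 = {}"
  shows "Inv (T1 \<union> T2) (F1 @ F2) (D1 \<union> D2) (conjQ D1 Q1 D2 Q2)"
proof -
  let ?W = "evs (D1 \<union> D2)" let ?Q = "conjQ D1 Q1 D2 Q2"
  note I = InvD[OF inv1] and J = InvD[OF inv2]
  have dis': "D2 \<inter> D1 = {}" "T2 \<inter> T1 = {}" using dis tdis by auto
  note H1 = conj_half[OF inv1 inv2 dis tdis]
  note H2 = conj_half[OF inv2 inv1 dis'(1) dis'(2), folded conjQ_sym, unfolded Un_commute[of D2 D1]]
  have K0: "label ` set (F1 @ F2) = T1 \<union> T2" using I(1) J(1) by auto
  have K1: "\<forall>x\<in>D1 \<union> D2. x \<ge> 1" using I(2) J(2) by auto
  have K2: "\<forall>j. ?Q j \<subseteq> ?W \<times> ?W"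
  proof (intro allI subsetI)
    fix j p assume "p \<in> ?Q j"
    then obtain x y where p: "p = (x,y)" "(x,y) \<in> ?Q j" by (cases p) auto
    then show "p \<in> ?W \<times> ?W" unfolding memconjQ by (auto simp: evs_def)
  qed
  have K3: "\<forall>j x. (x,0) \<notin> ?Q j" unfolding memconjQ using I(2) J(2) by force
  have K4: "\<forall>j y. (-1,y) \<in> ?Q j \<longleftrightarrow> y = -1" unfolding memconjQ using I(5) J(5) by (auto simp: evs_def)
  have K5: "\<forall>j\<in>T1 \<union> T2. (\<exists>k\<in>D1 \<union> D2. (0,k)\<in>?Q j) \<and> (\<forall>k. (0,k)\<in>?Q j \<longrightarrow> k\<in>D1 \<union> D2)"
  proof
    fix j assume j: "j \<in> T1 \<union> T2"
    then obtain k where k: "k \<in> D1 \<union> D2" "(0,k) \<in> Q1 j \<union> Q2 j" using I(6) J(6) by blast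
    then show "(\<exists>k\<in>D1 \<union> D2. (0,k)\<in>?Q j) \<and> (\<forall>k. (0,k)\<in>?Q j \<longrightarrow> k\<in>D1 \<union> D2)"
      unfolding memconjQ by blast
  qed
  have K6: "\<forall>j k. j \<notin> T1 \<union> T2 \<longrightarrow> (0,k)\<in>?Q j \<longrightarrow> k = -1"
    unfolding memconjQ using I(8) J(8) I(2) J(2) by force
  have K7: "\<forall>\<sigma>. rootpath (F1 @ F2) \<sigma> \<longrightarrow> nsrc (agSeq \<sigma>)"
    using I(9) J(9) by (auto simp: rootpath_append)
  have K8: "\<forall>\<sigma>. rootpath (F1 @ F2) \<sigma> \<longrightarrow> (\<exists>u. reach ?W ?Q 0 (agSeq \<sigma>) u)"
    using H1(3) H2(3) by (auto simp: rootpath_append)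
  have K9: "\<forall>\<sigma> u. rootpath (F1 @ F2) \<sigma> \<longrightarrow> reach ?W ?Q 0 (agSeq \<sigma>) u \<longrightarrow> u \<noteq> -1"
    using H1(4) H2(4) by (auto simp: rootpath_append)
  have K10: "\<forall>s t u. nsrc s \<longrightarrow> nsrc t \<longrightarrow> reach ?W ?Q 0 s u \<longrightarrow> reach ?W ?Q 0 t u \<longrightarrow> u \<noteq> -1 \<longrightarrow> s = t"
  proof (intro allI impI)
    fix s t u assume ns: "nsrc s" and nt: "nsrc t" and rs: "reach ?W ?Q 0 s u" and rt: "reach ?W ?Q 0 t u" and u: "u \<noteq> -1"
    have uW: "u \<in> ?W" using reach_in[OF _ rs] by (simp add: evs_def)
    have z: "\<And>s. reach ?W ?Q 0 s 0 \<Longrightarrow> s = []"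
      by (metis K3 list.exhaust reach_avoid)
    consider "u = 0" | "u \<in> D1" | "u \<in> D2" using uW u by (auto simp: evs_def)
    then show "s = t"
    proof cases
      case 1 then show ?thesis using z rs rt by blast
    next
      case 2 then show ?thesis using H1(2)[OF rs 2] H1(2)[OF rt 2] I(12) ns nt u by blast
    next
      case 3 then show ?thesis using H2(2)[OF rs 3] H2(2)[OF rt 3] J(12) ns nt u by blast
    qed
  qed
  show ?thesis unfolding Inv_def
    using K0 K1 K2 K3 K4 K5 K6 K7 K8 K9 K10 by blast
qed

lemma umodel_nonprop: "U_model \<phi> D Q pre \<Longrightarrow> \<not> propositional \<phi>"
  by (induction rule: U_model.induct) auto

lemma dbi_nonprop: "dbi_normal \<phi> \<Longrightarrow> \<not> propositional \<phi>"
  by (induction rule: dbi_normal.induct) auto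

lemma prop_mtree: "propositional \<xi> \<Longrightarrow> mtree \<xi> = [] \<and> ta \<xi> = {}"
  by (induction \<xi>) auto

lemma inv_model: "U_model \<phi> D Q pre \<Longrightarrow> dbi_normal \<phi> \<Longrightarrow> Inv (ta \<phi>) (mtree \<phi>) D Q"
proof (induction rule: U_model.induct)
  case (base \<xi> m i)
  then show ?case using base_inv[OF base(2), of i] prop_mtree[OF base(1)] by simp
next
  case (bel \<psi> D Q pre m i)
  have "dbi_normal \<psi> \<and> i \<notin> ta \<psi>"
    using bel(5)
  proof (cases rule: dbi_normal.cases)
    case bel_prop
    then show ?thesis using umodel_nonprop[OF bel(1)] by simp
  next
    case (bel_conj \<xi> \<phi>)
    then obtain D1 Q1 p1 where "U_model \<xi> D1 Q1 p1" using bel(1)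
      by (auto elim: U_model.cases)
    then show ?thesis using umodel_nonprop bel_conj by blast
  qed auto
  then have "Inv {i} [Node i (mtree \<psi>)] (insert m D) (belQ i D Q m)"
    using bel_step[OF bel(4)] bel(2,3) by blast
  then show ?case by (simp add: belQ_def)
next
  case (bel_conj \<xi> \<psi> D Q pre m i)
  have "dbi_normal \<psi> \<and> i \<notin> ta \<psi>"
    using bel_conj(6)
  proof (cases rule: dbi_normal.cases)
    case bel_prop
    then show ?thesis using umodel_nonprop[OF bel_conj(2)] by simp
  next
    case bel
    then have "dbi_normal \<xi>" by (auto elim: dbi_normal.cases)
    then show ?thesis using dbi_nonprop bel_conj(1) by blast
  qed auto
  then have "Inv {i} [Node i (mtree \<psi>)] (insert m D) (belQ i D Q m)"
    using bel_step[OF bel_conj(5)] bel_conj(3,4) by blast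
  then show ?case using prop_mtree[OF bel_conj(1)] by (simp add: belQ_def)
next
  case (conj \<psi> D1 Q1 pre1 \<theta> D2 Q2 pre2)
  from conj(6) have "dbi_normal \<psi>" "dbi_normal \<theta>" "ta \<psi> \<inter> ta \<theta> = {}"
    by (auto elim: dbi_normal.cases)
  then have "Inv (ta \<psi> \<union> ta \<theta>) (mtree \<psi> @ mtree \<theta>) (D1 \<union> D2) (conjQ D1 Q1 D2 Q2)"
    using conj_step conj by blast
  then show ?case by (simp add: conjQ_def)
qed

theorem theorem8:
  fixes n :: nat and \<phi> :: "'p fm" and D :: "int set"
    and Q :: "nat \<Rightarrow> (int \<times> int) set" and pre :: "int \<Rightarrow> 'p fm"
  assumes "n > 1"
    and "agents_of \<phi> \<subseteq> {1..n}"
    and "dbi_normal \<phi>"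
    and "U_model \<phi> D Q pre"
  shows "privatized n (evs D) Q 0 \<phi>"
proof -
  note I = InvD[OF inv_model[OF assms(4) assms(3)]]
  show ?thesis unfolding privatized_def RootP_def cluster_def
  proof (intro ballI conjI allI impI)
    fix \<sigma> assume "\<sigma> \<in> {\<sigma>. rootpath (mtree \<phi>) \<sigma>}"
    then have rp: "rootpath (mtree \<phi>) \<sigma>" by simp
    obtain u where u: "reach (evs D) Q 0 (agSeq \<sigma>) u" using I(10)[OF rp] by blast
    have "u \<in> evs D" using reach_in[OF _ u] by (simp add: evs_def)
    then show "{u \<in> evs D. reach (evs D) Q 0 (agSeq \<sigma>) u} \<noteq> {}" using u by blast
    fix s assume s: "nsr n s \<and> s \<noteq> agSeq \<sigma>"
    show "{u \<in> evs D. reach (evs D) Q 0 (agSeq \<sigma>) u} \<inter> {u \<in> evs D. reach (evs D) Q 0 s u} = {}"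
    proof (rule ccontr)
      assume "{u \<in> evs D. reach (evs D) Q 0 (agSeq \<sigma>) u} \<inter> {u \<in> evs D. reach (evs D) Q 0 s u} \<noteq> {}"
      then obtain w where w: "reach (evs D) Q 0 (agSeq \<sigma>) w" "reach (evs D) Q 0 s w" by blast
      have "w \<noteq> -1" using I(11)[OF rp w(1)] .
      then have "s = agSeq \<sigma>" using I(12)[OF nsr_nsrc I(9)[OF rp] w(2) w(1)] s by blast
      then show False using s by blast
    qed
  qed
qed

end
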